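(* Consider the full-duplex (FD) single-stage relay selection (SRS) scheme described in the context, with $\varpi=1$, thresholds $\gamma_{th_j}=2^{R_{D_j}}-1$ for $j=1,2$, and power coefficients satisfying $0<a_1<a_2$, $a_1+a_2=1$, $a_2>a_1\gamma_{th_2}$. Then its diversity order is zero: $$-\lim_{\rho\to\infty}\frac{\log P_{SRS}^{FD}(\rho)}{\log\rho}=0 .$$
   Context: Network model. A base station (BS) is at the origin of the plane. There are $K\ge 1$ relays $R_1,\dots,R_K$ whose positions are i.i.d. uniformly distributed in the disc of radius $R_{\mathcal D}>0$ centred at the origin; $d_{SR_i}$ is the distance from the BS to $R_i$. Two users $D_1,D_2$ are at fixed points of the plane at distances $d_1,d_2>0$ from the BS, and $d_{R_iD_j}$ is the Euclidean distance between $R_i$ and $D_j$. Let $\alpha>0$ be the path loss exponent. The random variables $g_{SR_i}$, $g_{R_iD_1}$, $g_{R_iD_2}$ ($i=1,\dots,K$) are exponentially distributed with mean $1$ (squared magnitudes of $\mathcal{CN}(0,1)$ Rayleigh coefficients), $Z_i$ ($i=1,\dots,K$) is exponentially distributed with mean $\Omega_{LI}>0$ (loop-interference gain at $R_i$), and all of these are mutually independent and independent of the relay positions. Put $X_i=g_{SR_i}/(1+d_{SR_i}^\alpha)$ and $Y_{ji}=g_{R_iD_j}/(1+d_{R_iD_j}^\alpha)$. Let $\rho>0$ be the transmit SNR, $a_1,a_2$ power allocation coefficients, and $\varpi\in\{0,1\}$ the duplex factor. Define $\gamma_{D_2\to R_i}=\frac{\rho X_i a_2}{\rho X_i a_1+\rho\varpi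 Z_i+1}$, $\gamma_{D_1\to R_i}=\frac{\rho X_i a_1}{\rho\varpi Z_i+1}$, $\gamma^{(i)}_{D_2\to D_1}=\frac{\rho Y_{1i}a_2}{\rho Y_{1i}a_1+1}$, $\gamma^{(i)}_{D_1}=\rho Y_{1i}a_1$, $\gamma^{(i)}_{D_2}=\frac{\rho Y_{2i}a_2}{\rho Y_{2i}a_1+1}$. Target rates $R_{D_1},R_{D_2}>0$ are given; in FD mode $\varpi=1$ and $\gamma_{th_j}=2^{R_{D_j}}-1$; in HD mode $\varpi=0$ and $\gamma_{th_j}=2^{2R_{D_j}}-1$. SRS scheme: with $W_i=\min\{\gamma_{D_2\to R_i},\gamma^{(i)}_{D_2\to D_1},\gamma^{(i)}_{D_2}\}$, the outage probability is $P_{SRS}(\rho)=\Pr(\max_{1\le i\le K}W_i<\gamma_{th_2})$; $P_{SRS}^{FD}$ denotes it in FD mode. *)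

theory Defs
  imports "HOL-Probability.Probability"
begin

text \<open>Points of the plane are modelled as real \<times> real; the norm on real \<times> real is Euclidean.
  One relay's randomness: (position, g_SR, g_RD1, g_RD2, Z).\<close>

type_synonym relay_sample = "(real \<times> real) \<times> real \<times> real \<times> real \<times> real"

definition exp_mean :: "real \<Rightarrow> real measure" where
  "exp_mean m = density lborel (\<lambda>x. ennreal (exponential_density (1 / m) x))"

definition relay_measure :: "real \<Rightarrow> real \<Rightarrow> relay_sample measure" where
  "relay_measure RD Omega =
     uniform_measure lborel (cball (0::real\<times>real) RD) \<Otimes>\<^sub>M
     (exp_mean 1 \<Otimes>\<^sub>M (exp_mean 1 \<Otimes>\<^sub>M (exp_mean 1 \<Otimes>\<^sub>M exp_mean Omega)))"

definition pathloss :: "real \<Rightarrow> real \<Rightarrow> real" where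
  "pathloss alpha d = 1 + d powr alpha"

definition W_relay ::
  "real \<Rightarrow> real \<times> real \<Rightarrow> real \<times> real \<Rightarrow> real \<Rightarrow> real \<Rightarrow> real \<Rightarrow> real \<Rightarrow> relay_sample \<Rightarrow> real" where
  "W_relay alpha D1 D2 a1 a2 varpi rho s =
     (case s of (p, gSR, g1, g2, Z) \<Rightarrow>
       let X = gSR / pathloss alpha (norm p);
           Y1 = g1 / pathloss alpha (dist p D1);
           Y2 = g2 / pathloss alpha (dist p D2);
           gD2R = rho * X * a2 / (rho * X * a1 + rho * varpi * Z + 1);
           gD2D1 = rho * Y1 * a2 / (rho * Y1 * a1 + 1);
           gD2 = rho * Y2 * a2 / (rho * Y2 * a1 + 1)
       in min gD2R (min gD2D1 gD2))"

definition P_SRS ::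
  "nat \<Rightarrow> real \<Rightarrow> real \<Rightarrow> real \<Rightarrow> real \<times> real \<Rightarrow> real \<times> real \<Rightarrow> real \<Rightarrow> real \<Rightarrow> real \<Rightarrow> real \<Rightarrow> real \<Rightarrow> real" where
  "P_SRS K RD Omega alpha D1 D2 a1 a2 varpi th2 rho =
     measure (PiM {1..K} (\<lambda>_. relay_measure RD Omega))
       {\<omega> \<in> space (PiM {1..K} (\<lambda>_. relay_measure RD Omega)).
          Max ((\<lambda>i. W_relay alpha D1 D2 a1 a2 varpi rho (\<omega> i)) ` {1..K}) < th2}"

end

theory Submission
  imports Defs
begin

lemma ps_exp: "m > 0 \<Longrightarrow> prob_space (exp_mean m)"
  unfolding exp_mean_def by (rule prob_space_exponential_density) simp

lemma ps_unif: "RD > 0 \<Longrightarrow> prob_space (uniform_measure lborel (cball (0::real\<times>real) RD))"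
proof -
  assume "RD > 0"
  have e: "emeasure lborel (cball (0::real\<times>real) RD) = ennreal (measure lborel (cball (0::real\<times>real) RD))"
    using emeasure_lborel_cball_finite[of "0::real\<times>real" RD] by (intro emeasure_eq_ennreal_measure) auto
  have "measure lborel (cball (0::real\<times>real) RD) > 0" using \<open>RD > 0\<close> by (rule content_cball_pos)
  then show "prob_space (uniform_measure lborel (cball (0::real\<times>real) RD))"
    using e by (intro prob_space_uniform_measure) auto
qed

lemma ps_relay: "RD > 0 \<Longrightarrow> Omega > 0 \<Longrightarrow> prob_space (relay_measure RD Omega)"
  unfolding relay_measure_def by (intro prob_space_pair ps_exp ps_unif) auto

lemma exp_cdf: "m > 0 \<Longrightarrow> a \<ge> 0 \<Longrightarrow> measure (exp_mean m) {..a} = 1 - exp (- a / m)"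
proof -
  assume m: "m > 0" and a: "a \<ge> 0"
  have "emeasure (exp_mean m) {..a} = erlang_CDF 0 (1/m) a"
    unfolding exp_mean_def using m by (intro emeasure_erlang_density) simp
  moreover have "exp (- (a/m)) \<le> 1" using a m by simp
  ultimately show ?thesis using a by (simp add: measure_def erlang_CDF_def)
qed

lemma exp_tail: "m > 0 \<Longrightarrow> a \<ge> 0 \<Longrightarrow> measure (exp_mean m) {a<..} = exp (- a / m)"
proof -
  assume m: "m > 0" and a: "a \<ge> 0"
  interpret prob_space "exp_mean m" using ps_exp m .
  have "{a<..} = space (exp_mean m) - {..a}" by (auto simp: exp_mean_def)
  then have "measure (exp_mean m) {a<..} = 1 - measure (exp_mean m) {..a}"
    using prob_compl[of "{..a}"] by (simp add: exp_mean_def)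
  then show ?thesis using exp_cdf[OF m a] by simp
qed

lemma exp_01: "measure (exp_mean 1) {0<..1} > 0"
proof -
  interpret prob_space "exp_mean 1" using ps_exp by simp
  have "{0<..1} = {..1::real} - {..0}" by auto
  then have "measure (exp_mean 1) {0<..1} = measure (exp_mean 1) {..1} - measure (exp_mean 1) {..0}"
    by (simp, intro finite_measure_Diff) (auto simp: exp_mean_def)
  also have "\<dots> = 1 - exp (-1)" using exp_cdf[of 1 1] exp_cdf[of 1 0] by simp
  finally show ?thesis by simp
qed

lemma relay_B_pos:
  assumes RD: "RD > 0" and Om: "Omega > 0" and M0: "M0 \<ge> 0"
  shows "emeasure (relay_measure RD Omega) (UNIV \<times> {0<..1} \<times> UNIV \<times> UNIV \<times> {M0<..}) > 0"
proof -
  interpret E1: prob_space "exp_mean 1" using ps_exp by simp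
  interpret EZ: prob_space "exp_mean Omega" using ps_exp Om by simp
  interpret P3: prob_space "exp_mean 1 \<Otimes>\<^sub>M exp_mean Omega" by (intro prob_space_pair ps_exp) (use Om in auto)
  interpret P2: prob_space "exp_mean 1 \<Otimes>\<^sub>M (exp_mean 1 \<Otimes>\<^sub>M exp_mean Omega)" by (intro prob_space_pair ps_exp P3.prob_space_axioms) (use Om in auto)
  interpret P1: prob_space "exp_mean 1 \<Otimes>\<^sub>M (exp_mean 1 \<Otimes>\<^sub>M (exp_mean 1 \<Otimes>\<^sub>M exp_mean Omega))" by (intro prob_space_pair ps_exp P2.prob_space_axioms) (use Om in auto)
  interpret U: prob_space "uniform_measure lborel (cball (0::real\<times>real) RD)"
    using ps_unif[OF RD] .
  have sp1: "space (exp_mean m) = UNIV" for m by (simp add: exp_mean_def)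
  have s1: "A \<in> sets (exp_mean m)" if "A \<in> sets borel" for A m using that by (simp add: exp_mean_def)
  have e1: "emeasure (exp_mean 1) {0<..1} > 0" using exp_01 E1.emeasure_eq_measure by simp
  have e2: "emeasure (exp_mean Omega) {M0<..} > 0" using exp_tail[OF Om M0] EZ.emeasure_eq_measure by simp
  have "emeasure (exp_mean 1 \<Otimes>\<^sub>M exp_mean Omega) (UNIV \<times> {M0<..}) > 0"
    using EZ.emeasure_pair_measure_Times[of UNIV "exp_mean 1" "{M0<..}"] e2 E1.emeasure_space_1 sp1
    by (simp add: s1)
  then have "emeasure (exp_mean 1 \<Otimes>\<^sub>M (exp_mean 1 \<Otimes>\<^sub>M exp_mean Omega)) (UNIV \<times> UNIV \<times> {M0<..}) > 0"
    using P3.emeasure_pair_measure_Times[of UNIV "exp_mean 1" "UNIV \<times> {M0<..}"] E1.emeasure_space_1 sp1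
    by (simp add: s1)
  then have "emeasure (exp_mean 1 \<Otimes>\<^sub>M (exp_mean 1 \<Otimes>\<^sub>M (exp_mean 1 \<Otimes>\<^sub>M exp_mean Omega))) ({0<..1} \<times> UNIV \<times> UNIV \<times> {M0<..}) > 0"
    using P2.emeasure_pair_measure_Times[of "{0<..1}" "exp_mean 1" "UNIV \<times> UNIV \<times> {M0<..}"] e1
    by (simp add: s1 ennreal_zero_less_mult_iff)
  moreover have ev: "{0<..1} \<times> UNIV \<times> UNIV \<times> {M0<..} \<in> P1.events"
    by (intro pair_measureI) (auto simp: s1)
  ultimately show ?thesis unfolding relay_measure_def
    using P1.emeasure_pair_measure_Times[of UNIV "uniform_measure lborel (cball (0::real\<times>real) RD)" "{0<..1} \<times> UNIV \<times> UNIV \<times> {M0<..}"] U.emeasure_space_1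
    by simp
qed


lemma W_small:
  assumes rho: "rho > 0" and th: "th > 0" and a1: "a1 > 0" and a2: "a2 > 0"
    and s: "s \<in> UNIV \<times> {0<..1} \<times> UNIV \<times> UNIV \<times> {2 * a2 / th<..}"
  shows "W_relay alpha D1 D2 a1 a2 1 rho s < th"
proof -
  obtain p gSR g1 g2 Z where sdef: "s = (p, gSR, g1, g2, Z)" by (cases s) auto
  have g: "0 < gSR" "gSR \<le> 1" and Z: "Z > 2 * a2 / th" using s sdef by auto
  define X where "X = gSR / pathloss alpha (norm p)"
  have pl: "pathloss alpha (norm p) \<ge> 1" by (simp add: pathloss_def)
  have X0: "X \<ge> 0" using g pl by (simp add: X_def)
  have X1: "X \<le> 1" using g pl unfolding X_def by (simp add: divide_le_eq)
  have Zth: "Z * th > 2 * a2" using Z th by (simp add: pos_divide_less_eq)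
  have Zpos: "Z > 0" using Z th a2 by (smt (verit) divide_pos_pos)
  have den: "rho * X * a1 + rho * 1 * Z + 1 > 0" using rho X0 a1 Zpos
    by (smt (verit) mult_nonneg_nonneg mult_pos_pos)
  have "rho * X * a2 \<le> rho * a2" using rho X1 a2 by (simp add: mult_left_le)
  also have "\<dots> < rho * (Z * th)" using Zth rho a2 by simp
  also have "\<dots> < th * (rho * X * a1 + rho * 1 * Z + 1)" using rho X0 a1 th
    by (simp add: algebra_simps) (smt (verit) mult_nonneg_nonneg mult_pos_pos)
  finally have *: "rho * X * a2 / (rho * X * a1 + rho * 1 * Z + 1) < th"
    using den by (simp add: pos_divide_less_eq mult.commute)
  show ?thesis unfolding W_relay_def sdef Let_def prod.case X_def[symmetric]
    using * by (simp only: min_less_iff_disj) simp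
qed


theorem mainTheorem1:
  fixes K :: nat and RD Omega alpha a1 a2 RD1 RD2 :: real and D1 D2 :: "real \<times> real"
  assumes "K \<ge> 1" and "RD > 0" and "Omega > 0" and "alpha > 0"
    and "norm D1 > 0" and "norm D2 > 0"
    and "RD1 > 0" and "RD2 > 0"
    and "0 < a1" and "a1 < a2" and "a1 + a2 = 1"
    and "a2 > a1 * (2 powr RD2 - 1)"
  shows "((\<lambda>rho. - (ln (P_SRS K RD Omega alpha D1 D2 a1 a2 1 (2 powr RD2 - 1) rho) / ln rho))
           \<longlongrightarrow> 0) at_top"
proof -
  define th where "th = 2 powr RD2 - (1::real)"
  have "1 < 2 powr RD2" using \<open>RD2 > 0\<close> powr_less_mono[of 0 RD2 "2::real"] by simp
  then have th: "th > 0" by (simp add: th_def)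
  have a2: "a2 > 0" using assms by simp
  define B where "B = (UNIV \<times> {0<..1} \<times> UNIV \<times> UNIV \<times> {2 * a2 / th<..}
     :: ((real \<times> real) \<times> real \<times> real \<times> real \<times> real) set)"
  define R where "R = relay_measure RD Omega"
  define P where "P = PiM {1..K} (\<lambda>_. R)"
  have psR: "prob_space R" unfolding R_def using assms by (intro ps_relay) auto
  have spR: "space R = UNIV" by (simp add: R_def relay_measure_def exp_mean_def space_pair_measure)
  have measW[measurable]: "W_relay alpha D1 D2 a1 a2 1 rho \<in> borel_measurable R" for rho
    unfolding W_relay_def R_def relay_measure_def exp_mean_def pathloss_def Let_def
    by measurable
  interpret P: prob_space P unfolding P_def using psR by (intro prob_space_PiM) auto
  interpret PS: product_sigma_finite "\<lambda>_. R"
    unfolding product_sigma_finite_def using psR prob_space_imp_sigma_finite by blast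
  have Bs: "B \<in> sets R"
    using relay_B_pos[of RD Omega "2 * a2 / th"] assms th a2 emeasure_notin_sets
    unfolding B_def R_def by fastforce
  define PE where "PE = PiE {1..K} (\<lambda>_. B)"
  have PEs: "PE \<in> P.events" unfolding PE_def P_def using Bs by (intro sets_PiM_I_finite) auto
  have "emeasure P PE = (\<Prod>i\<in>{1..K}. emeasure R B)"
    unfolding P_def PE_def using Bs by (intro PS.emeasure_PiM) auto
  moreover have "emeasure R B > 0"
    using relay_B_pos[of RD Omega "2 * a2 / th"] assms th a2 unfolding B_def R_def by simp
  ultimately have "emeasure P PE > 0" by (simp only: prod_constant) (metis not_gr_zero power_not_zero gr_zeroI)
  then have cpos: "P.prob PE > 0" using P.emeasure_eq_measure by simp
  define c where "c = P.prob PE"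
  have bounds: "c \<le> P_SRS K RD Omega alpha D1 D2 a1 a2 1 th rho \<and> P_SRS K RD Omega alpha D1 D2 a1 a2 1 th rho \<le> 1"
    if rho: "rho > 0" for rho
  proof -
    define E where "E = {\<omega> \<in> space P. Max ((\<lambda>i. W_relay alpha D1 D2 a1 a2 1 rho (\<omega> i)) ` {1..K}) < th}"
    have PS_eq: "P_SRS K RD Omega alpha D1 D2 a1 a2 1 th rho = P.prob E"
      unfolding P_SRS_def E_def P_def R_def ..
    have E_eq: "E = {\<omega> \<in> space P. \<forall>i\<in>{1..K}. W_relay alpha D1 D2 a1 a2 1 rho (\<omega> i) < th}"
      unfolding E_def using \<open>K \<ge> 1\<close> by (subst Max_less_iff) auto
    have Es: "E \<in> P.events" unfolding E_eq P_def by measurable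
    have "PE \<subseteq> E"
    proof
      fix \<omega> assume w: "\<omega> \<in> PE"
      then have "\<omega> \<in> space P" unfolding P_def PE_def space_PiM spR by auto
      moreover have "\<forall>i\<in>{1..K}. W_relay alpha D1 D2 a1 a2 1 rho (\<omega> i) < th"
        using w unfolding PE_def B_def
        by (auto intro!: W_small[OF rho th \<open>0 < a1\<close> a2])
      ultimately show "\<omega> \<in> E" unfolding E_eq by simp
    qed
    then show ?thesis unfolding PS_eq c_def using P.finite_measure_mono[OF _ Es] P.prob_le_1 by auto
  qed
  show ?thesis
  proof (rule Lim_null_comparison)
    show "((\<lambda>rho. (- ln c) / ln rho) \<longlongrightarrow> 0) at_top"
      by (intro tendsto_divide_0[OF tendsto_const] filterlim_at_top_imp_at_infinity ln_at_top)
    have "eventually (\<lambda>rho. rho > (1::real)) at_top" by (rule eventually_gt_at_top)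
    then show "eventually (\<lambda>rho. norm (- (ln (P_SRS K RD Omega alpha D1 D2 a1 a2 1 (2 powr RD2 - 1) rho) / ln rho)) \<le> (- ln c) / ln rho) at_top"
    proof eventually_elim
      case (elim rho)
      have b: "c \<le> P_SRS K RD Omega alpha D1 D2 a1 a2 1 th rho" "P_SRS K RD Omega alpha D1 D2 a1 a2 1 th rho \<le> 1"
        using bounds[of rho] elim by auto
      define q where "q = P_SRS K RD Omega alpha D1 D2 a1 a2 1 th rho"
      have c0: "c > 0" using cpos c_def by simp
      have lq: "ln q \<le> 0" "ln c \<le> ln q" using b c0 unfolding q_def by auto
      have lr: "ln rho > 0" using elim by simp
      have "norm (- (ln q / ln rho)) = (- ln q) / ln rho" using lq lr by simp
      also have "\<dots> \<le> (- ln c) / ln rho" using lq lr by (simp add: divide_right_mono)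
      finally show ?case unfolding q_def th_def .
    qed
  qed
qed

end
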